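(* Let $0<p_0,p<\infty$, $1<q_0<q<\infty$ with $q/p=q_0/p_0$. Let $f,g$ be measurable functions whose supports have finite measure, with $f,g\in L(p,q)$, such that the integral $\int_0^\infty (f^*(t)^{q_0}-g^*(t)^{q_0})\,d(t^{q_0/p_0})$ exists and is $\ge0$. Suppose there exists $\tau_1\in[0,\infty)$ such that \[ \int_\tau^\infty\lambda_g(s)^{q_0/p_0}\,ds\le\int_\tau^\infty\lambda_f(s)^{q_0/p_0}\,ds\quad\text{for }\tau\ge\tau_1, \] \[ \int_\tau^\infty\lambda_f(s)^{q_0/p_0}\,ds\le\int_\tau^\infty\lambda_g(s)^{q_0/p_0}\,ds\quad\text{for }\tau\le\tau_1. \] Then $\|g\|_{L(p,q)}\le\|f\|_{L(p,q)}$.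
   Context: $\lambda_f(\tau)=\mu\{|f|>\tau\}$ and $f^*(s)=\inf\{\tau>0:\lambda_f(\tau)\le s\}$ for $s>0$. For $a>0$, $\int_0^\infty h(t)\,d(t^a)$ means $a\int_0^\infty h(t)t^{a-1}\,dt$. For $0<p,q<\infty$ the Lorentz quasi-norm is $\|f\|_{L(p,q)}=\bigl(\int_0^\infty f^*(s)^q\,d(s^{q/p})\bigr)^{1/q}=\bigl(\int_0^\infty\lambda_f(s)^{q/p}\,d(s^q)\bigr)^{1/q}$, and $L(p,q)$ is the set of $f$ with finite quasi-norm. *)

theory Defs
  imports "HOL-Analysis.Analysis"
begin

definition distr_fun :: "'a measure \<Rightarrow> ('a \<Rightarrow> real) \<Rightarrow> real \<Rightarrow> real" where
  "distr_fun M f \<tau> = measure M {x \<in> space M. \<bar>f x\<bar> > \<tau>}"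

definition rearr :: "'a measure \<Rightarrow> ('a \<Rightarrow> real) \<Rightarrow> real \<Rightarrow> real" where
  "rearr M f s = Inf {\<tau>. \<tau> > 0 \<and> distr_fun M f \<tau> \<le> s}"

definition lorentz_integral :: "'a measure \<Rightarrow> real \<Rightarrow> real \<Rightarrow> ('a \<Rightarrow> real) \<Rightarrow> ennreal" where
  "lorentz_integral M p q f =
     (\<integral>\<^sup>+ s. ennreal (rearr M f s powr q * ((q / p) * s powr (q / p - 1)))
        * indicator {0<..} s \<partial>lborel)"

definition in_lorentz :: "'a measure \<Rightarrow> real \<Rightarrow> real \<Rightarrow> ('a \<Rightarrow> real) \<Rightarrow> bool" where
  "in_lorentz M p q f \<longleftrightarrow> f \<in> borel_measurable M \<and> lorentz_integral M p q f < \<infinity>"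

text \<open>Lorentz quasi-norm (meaningful when the function lies in L(p,q)).\<close>
definition lorentz_norm :: "'a measure \<Rightarrow> real \<Rightarrow> real \<Rightarrow> ('a \<Rightarrow> real) \<Rightarrow> real" where
  "lorentz_norm M p q f = enn2real (lorentz_integral M p q f) powr (1 / q)"

end

theory Submission
  imports Defs
begin


lemma pow_int_Icc:
  assumes "0 \<le> x" "0 < b"
  shows "(\<integral>\<^sup>+t. ennreal (b * t powr (b-1)) * indicator {0..x} t \<partial>lborel) = ennreal (x powr b)"
proof -
  have "((\<lambda>t. t powr (b-1)) has_integral (x powr (b - 1 + 1) / (b - 1 + 1))) {0..x}"
    using assms by (intro has_integral_powr_from_0) auto
  then have "((\<lambda>t. b * t powr (b-1)) has_integral (b * (x powr b / b))) {0..x}"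
    by (intro has_integral_mult_right) simp
  then have "((\<lambda>t. b * t powr (b-1)) has_integral (x powr b)) {0..x}"
    using assms by simp
  then show ?thesis
    using assms by (intro nn_integral_has_integral_lebesgue') auto
qed

lemma pow_int_gen:
  assumes "0 \<le> x" "0 < b" and S: "{0<..<x} \<subseteq> S" "S \<subseteq> {0..x}"
  shows "(\<integral>\<^sup>+t. ennreal (b * t powr (b-1)) * indicator S t \<partial>lborel) = ennreal (x powr b)"
proof -
  have "(\<integral>\<^sup>+t. ennreal (b * t powr (b-1)) * indicator S t \<partial>lborel)
      = (\<integral>\<^sup>+t. ennreal (b * t powr (b-1)) * indicator {0..x} t \<partial>lborel)"
  proof (rule nn_integral_cong_AE)
    have "AE t in lborel. t \<noteq> 0" "AE t in lborel. t \<noteq> x" by (rule AE_lborel_singleton)+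
    then show "AE t in lborel. ennreal (b * t powr (b-1)) * indicator S t
         = ennreal (b * t powr (b-1)) * indicator {0..x} t"
    proof eventually_elim
      case (elim t)
      then have "t \<in> S \<longleftrightarrow> t \<in> {0..x}" using S by auto
      then show ?case by (simp add: indicator_def)
    qed
  qed
  then show ?thesis using pow_int_Icc[OF assms(1,2)] by simp
qed


lemma layer_cake:
  fixes u v :: "real \<Rightarrow> real"
  assumes um: "(\<lambda>s. u s * indicator {0<..} s) \<in> borel_measurable borel"
    and vm: "(\<lambda>s. v s * indicator {0<..} s) \<in> borel_measurable borel"
    and u0: "\<And>s. 0 < s \<Longrightarrow> 0 \<le> u s" and v0: "\<And>t. 0 < t \<Longrightarrow> 0 \<le> v t"
    and eq: "\<And>s t. 0 < s \<Longrightarrow> 0 < t \<Longrightarrow> t < u s \<longleftrightarrow> s < v t"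
    and a: "0 < a" and r: "0 < r"
  shows "(\<integral>\<^sup>+s. ennreal (u s powr a * (r * s powr (r-1))) * indicator {0<..} s \<partial>lborel)
       = (\<integral>\<^sup>+t. ennreal (a * t powr (a-1) * v t powr r) * indicator {0<..} t \<partial>lborel)"
proof -
  define K where "K = (\<lambda>s t. if 0 < s \<and> 0 < t \<and> s < v t * indicator {0<..} t
      then ennreal (a * t powr (a-1)) * ennreal (r * s powr (r-1)) else 0)"
  have Km: "case_prod K \<in> borel_measurable (lborel \<Otimes>\<^sub>M lborel)"
    unfolding K_def using vm by measurable
  have L: "ennreal (u s powr a * (r * s powr (r-1))) * indicator {0<..} s = (\<integral>\<^sup>+t. K s t \<partial>lborel)" for s
  proof (cases "0 < s")
    case True
    have "(\<integral>\<^sup>+t. K s t \<partial>lborel) = (\<integral>\<^sup>+t. ennreal (a * t powr (a-1)) * indicator {0<..<u s} t * ennreal (r * s powr (r-1)) \<partial>lborel)"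
      using True eq by (intro nn_integral_cong) (auto simp: K_def indicator_def)
    also have "\<dots> = (\<integral>\<^sup>+t. ennreal (a * t powr (a-1)) * indicator {0<..<u s} t \<partial>lborel) * ennreal (r * s powr (r-1))"
      by (rule nn_integral_multc) simp
    also have "\<dots> = ennreal (u s powr a) * ennreal (r * s powr (r-1))"
      using True u0 a by (subst pow_int_gen) auto
    also have "\<dots> = ennreal (u s powr a * (r * s powr (r-1)))"
      using r by (simp add: ennreal_mult)
    finally show ?thesis using True by simp
  next
    case False
    then show ?thesis by (simp add: K_def)
  qed
  have R: "ennreal (a * t powr (a-1) * v t powr r) * indicator {0<..} t = (\<integral>\<^sup>+s. K s t \<partial>lborel)" for t
  proof (cases "0 < t")
    case True
    have "(\<integral>\<^sup>+s. K s t \<partial>lborel) = (\<integral>\<^sup>+s. ennreal (r * s powr (r-1)) * indicator {0<..<v t} s * ennreal (a * t powr (a-1)) \<partial>lborel)"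
      using True by (intro nn_integral_cong) (auto simp: K_def indicator_def mult.commute)
    also have "\<dots> = (\<integral>\<^sup>+s. ennreal (r * s powr (r-1)) * indicator {0<..<v t} s \<partial>lborel) * ennreal (a * t powr (a-1))"
      by (rule nn_integral_multc) simp
    also have "\<dots> = ennreal (v t powr r) * ennreal (a * t powr (a-1))"
      using True v0 r by (subst pow_int_gen) auto
    also have "\<dots> = ennreal (a * t powr (a-1) * v t powr r)"
      using a by (simp add: ennreal_mult mult.commute)
    finally show ?thesis using True by simp
  next
    case False
    then show ?thesis by (simp add: K_def)
  qed
  have "(\<integral>\<^sup>+s. ennreal (u s powr a * (r * s powr (r-1))) * indicator {0<..} s \<partial>lborel)
      = (\<integral>\<^sup>+s. (\<integral>\<^sup>+t. K s t \<partial>lborel) \<partial>lborel)" by (simp add: L)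
  also have "\<dots> = (\<integral>\<^sup>+t. (\<integral>\<^sup>+s. K s t \<partial>lborel) \<partial>lborel)"
    by (rule lborel_pair.Fubini'[OF Km, symmetric])
  also have "\<dots> = (\<integral>\<^sup>+t. ennreal (a * t powr (a-1) * v t powr r) * indicator {0<..} t \<partial>lborel)"
    by (simp add: R)
  finally show ?thesis .
qed


lemma tail_identity:
  fixes L :: "real \<Rightarrow> real"
  assumes Lm: "(\<lambda>s. L s * indicator {0<..} s) \<in> borel_measurable borel"
    and L0: "\<And>s. 0 \<le> L s" and a: "1 < a"
  shows "(\<integral>\<^sup>+s. ennreal (a * s powr (a-1) * L s) * indicator {0<..} s \<partial>lborel)
       = (\<integral>\<^sup>+t. ennreal (a * (a-1) * t powr (a-2)) * (\<integral>\<^sup>+s. ennreal (L s) * indicator {t..} s \<partial>lborel)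
              * indicator {0<..} t \<partial>lborel)"
proof -
  define K where "K = (\<lambda>t s. if 0 < t \<and> t \<le> s
      then ennreal (a * (a-1) * t powr (a-2)) * ennreal (L s * indicator {0<..} s) else 0)"
  have Km: "case_prod K \<in> borel_measurable (lborel \<Otimes>\<^sub>M lborel)"
    unfolding K_def using Lm by measurable
  have L: "ennreal (a * s powr (a-1) * L s) * indicator {0<..} s = (\<integral>\<^sup>+t. K t s \<partial>lborel)" for s
  proof (cases "0 < s")
    case True
    have "(\<integral>\<^sup>+t. K t s \<partial>lborel) = (\<integral>\<^sup>+t. ennreal ((a-1) * t powr ((a-1)-1)) * indicator {0<..s} t * ennreal (a * L s) \<partial>lborel)"
      using True a L0 by (intro nn_integral_cong) (auto simp: K_def indicator_def ennreal_mult[symmetric] algebra_simps)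
    also have "\<dots> = (\<integral>\<^sup>+t. ennreal ((a-1) * t powr ((a-1)-1)) * indicator {0<..s} t \<partial>lborel) * ennreal (a * L s)"
      by (rule nn_integral_multc) simp
    also have "\<dots> = ennreal (s powr (a-1)) * ennreal (a * L s)"
      using True a by (subst pow_int_gen) auto
    also have "\<dots> = ennreal (a * s powr (a-1) * L s)"
      using a L0 by (simp add: ennreal_mult[symmetric] mult.commute mult.left_commute)
    finally show ?thesis using True by simp
  next
    case False
    then have "(\<lambda>t. K t s) = (\<lambda>t. 0)" by (auto simp: K_def fun_eq_iff)
    then show ?thesis using False by simp
  qed
  have R: "ennreal (a * (a-1) * t powr (a-2)) * (\<integral>\<^sup>+s. ennreal (L s) * indicator {t..} s \<partial>lborel)
              * indicator {0<..} t = (\<integral>\<^sup>+s. K t s \<partial>lborel)" for t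
  proof (cases "0 < t")
    case True
    have "(\<integral>\<^sup>+s. K t s \<partial>lborel) = (\<integral>\<^sup>+s. ennreal (a * (a-1) * t powr (a-2)) * (ennreal (L s) * indicator {t..} s) \<partial>lborel)"
      using True by (intro nn_integral_cong) (auto simp: K_def indicator_def)
    also have "\<dots> = ennreal (a * (a-1) * t powr (a-2)) * (\<integral>\<^sup>+s. ennreal (L s) * indicator {t..} s \<partial>lborel)"
    proof (rule nn_integral_cmult)
      have "(\<lambda>s. ennreal (L s * indicator {0<..} s) * indicator {t..} s) \<in> borel_measurable lborel"
        using Lm by measurable
      moreover have "(\<lambda>s. ennreal (L s * indicator {0<..} s) * indicator {t..} s) = (\<lambda>s. ennreal (L s) * indicator {t..} s)"
        using True by (auto simp: indicator_def fun_eq_iff)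
      ultimately show "(\<lambda>s. ennreal (L s) * indicator {t..} s) \<in> borel_measurable lborel" by simp
    qed
    finally show ?thesis using True by simp
  next
    case False
    then show ?thesis by (auto simp: K_def)
  qed
  have "(\<integral>\<^sup>+s. ennreal (a * s powr (a-1) * L s) * indicator {0<..} s \<partial>lborel)
      = (\<integral>\<^sup>+s. (\<integral>\<^sup>+t. K t s \<partial>lborel) \<partial>lborel)" by (simp add: L)
  also have "\<dots> = (\<integral>\<^sup>+t. (\<integral>\<^sup>+s. K t s \<partial>lborel) \<partial>lborel)"
    by (rule lborel_pair.Fubini'[OF Km])
  also have "\<dots> = (\<integral>\<^sup>+t. ennreal (a * (a-1) * t powr (a-2)) * (\<integral>\<^sup>+s. ennreal (L s) * indicator {t..} s \<partial>lborel)
              * indicator {0<..} t \<partial>lborel)"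
    by (simp add: R)
  finally show ?thesis .
qed




context
  fixes M :: "'a measure" and h :: "'a \<Rightarrow> real"
  assumes hm: "h \<in> borel_measurable M"
    and fin: "emeasure M {x \<in> space M. h x \<noteq> 0} < \<infinity>"
begin

lemma dsets: "{x \<in> space M. t < \<bar>h x\<bar>} \<in> sets M"
  using hm by measurable

lemma dfmeas: "0 \<le> t \<Longrightarrow> {x \<in> space M. t < \<bar>h x\<bar>} \<in> fmeasurable M"
proof -
  assume t: "0 \<le> t"
  have "emeasure M {x \<in> space M. t < \<bar>h x\<bar>} \<le> emeasure M {x \<in> space M. h x \<noteq> 0}"
    using t hm by (intro emeasure_mono) auto
  then show ?thesis using fin dsets by (auto simp: fmeasurable_def)
qed

lemma dnonneg: "0 \<le> distr_fun M h t"
  by (simp add: distr_fun_def)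

lemma dmono: "0 \<le> s \<Longrightarrow> s \<le> t \<Longrightarrow> distr_fun M h t \<le> distr_fun M h s"
  unfolding distr_fun_def
  by (rule measure_mono_fmeasurable) (auto intro: dsets dfmeas)

lemma dbound: "0 \<le> t \<Longrightarrow> distr_fun M h t \<le> measure M {x \<in> space M. h x \<noteq> 0}"
  unfolding distr_fun_def
  using fin hm by (intro measure_mono_fmeasurable) (auto intro: dsets simp: fmeasurable_def)

lemma drc: "0 \<le> t \<Longrightarrow> (\<lambda>n. distr_fun M h (t + 1 / Suc n)) \<longlonglongrightarrow> distr_fun M h t"
proof -
  assume t: "0 \<le> t"
  define A where "A = (\<lambda>n::nat. {x \<in> space M. t + 1 / Suc n < \<bar>h x\<bar>})"
  have U: "(\<Union>n. A n) = {x \<in> space M. t < \<bar>h x\<bar>}"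
  proof safe
    fix x assume x: "x \<in> space M" "t < \<bar>h x\<bar>"
    then obtain n where "1 / Suc n < \<bar>h x\<bar> - t"
      by (metis diff_gt_0_iff_gt nat_approx_posE)
    then have "t + 1 / Suc n < \<bar>h x\<bar>" by simp
    then show "x \<in> (\<Union>n. A n)" using x unfolding A_def by blast
  next
    fix x n assume "x \<in> A n" then show "x \<in> space M" "t < \<bar>h x\<bar>"
      by (auto simp: A_def) (smt (verit) of_nat_0_le_iff divide_nonneg_nonneg)
  qed
  have "(\<lambda>n. measure M (A n)) \<longlonglongrightarrow> measure M (\<Union>n. A n)"
  proof (rule Lim_measure_incseq)
    show "range A \<subseteq> sets M" using hm by (auto simp: A_def)
    show "incseq A"
    proof (rule incseq_SucI)
      fix n
      have "1 / real (Suc (Suc n)) \<le> 1 / Suc n" by (simp add: frac_le)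
      then show "A n \<subseteq> A (Suc n)" by (auto simp: A_def)
    qed
    show "emeasure M (\<Union>n. A n) \<noteq> \<infinity>" unfolding U using dfmeas[OF t] by (auto simp: fmeasurable_def)
  qed
  then have "(\<lambda>n. measure M (A n)) \<longlonglongrightarrow> measure M {x \<in> space M. t < \<bar>h x\<bar>}" by (simp only: U)
  then show ?thesis by (simp add: A_def distr_fun_def)
qed

lemma dlim0: "(\<lambda>n. distr_fun M h (real n)) \<longlonglongrightarrow> 0"
proof -
  define A where "A = (\<lambda>n::nat. {x \<in> space M. real n < \<bar>h x\<bar>})"
  have U: "(\<Inter>n. A n) = {}"
  proof safe
    fix x assume "x \<in> (\<Inter>n. A n)"
    moreover obtain n where "\<bar>h x\<bar> < real n" using reals_Archimedean2 by blast
    ultimately show "x \<in> {}" by (auto simp: A_def dest!: spec[of _ n])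
  qed
  have "(\<lambda>n. measure M (A n)) \<longlonglongrightarrow> measure M (\<Inter>n. A n)"
  proof (rule Lim_measure_decseq)
    show "range A \<subseteq> sets M" using hm by (auto simp: A_def)
    show "decseq A" by (rule decseq_SucI) (auto simp: A_def)
    show "emeasure M (A n) \<noteq> \<infinity>" for n using dfmeas[of "real n"] by (auto simp: fmeasurable_def A_def)
  qed
  then have "(\<lambda>n. measure M (A n)) \<longlonglongrightarrow> 0" by (simp add: U)
  then show ?thesis by (simp add: A_def distr_fun_def)
qed

lemma rnonempty: "0 < s \<Longrightarrow> \<exists>\<tau>>0. distr_fun M h \<tau> \<le> s"
proof -
  assume s: "0 < s"
  from order_tendstoD(2)[OF dlim0 s] obtain N where N: "\<And>n. n \<ge> N \<Longrightarrow> distr_fun M h (real n) < s"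
    by (auto simp: eventually_sequentially)
  show ?thesis using N[of "Suc N"] by (intro exI[of _ "real (Suc N)"]) auto
qed

lemma rnonneg: "0 < s \<Longrightarrow> 0 \<le> rearr M h s"
  unfolding rearr_def using rnonempty by (intro cInf_greatest) auto

lemma requiv:
  assumes s: "0 < s" and t: "0 < t"
  shows "t < rearr M h s \<longleftrightarrow> s < distr_fun M h t"
proof
  assume "t < rearr M h s"
  show "s < distr_fun M h t"
  proof (rule ccontr)
    assume "\<not> s < distr_fun M h t"
    then have "t \<in> {\<tau>. \<tau> > 0 \<and> distr_fun M h \<tau> \<le> s}" using t by auto
    then have "rearr M h s \<le> t" unfolding rearr_def by (intro cInf_lower) (auto intro: bdd_belowI[of _ 0])
    with \<open>t < rearr M h s\<close> show False by simp
  qed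
next
  assume st: "s < distr_fun M h t"
  show "t < rearr M h s"
  proof (rule ccontr)
    assume "\<not> t < rearr M h s"
    then have le: "rearr M h s \<le> t" by simp
    from order_tendstoD(1)[OF drc st] t obtain n where n: "s < distr_fun M h (t + 1 / Suc n)"
      by (auto simp: eventually_sequentially)
    have "rearr M h s < t + 1 / Suc n" using le by (smt (verit) of_nat_0_less_iff zero_less_Suc divide_pos_pos)
    then obtain \<tau> where tau: "\<tau> > 0" "distr_fun M h \<tau> \<le> s" "\<tau> < t + 1 / Suc n"
      unfolding rearr_def using rnonempty[OF s] by (subst (asm) cInf_less_iff) (auto intro: bdd_belowI[of _ 0])
    then have "distr_fun M h (t + 1 / Suc n) \<le> distr_fun M h \<tau>" by (intro dmono) auto
    with tau n show False by simp
  qed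
qed

lemma rantimono: "0 < s \<Longrightarrow> s \<le> s' \<Longrightarrow> rearr M h s' \<le> rearr M h s"
  unfolding rearr_def using rnonempty
  by (intro cInf_superset_mono) (auto intro: bdd_belowI[of _ 0])

end




lemma antimono_meas:
  fixes u :: "real \<Rightarrow> real"
  assumes "\<And>x y. 0 < x \<Longrightarrow> x \<le> y \<Longrightarrow> u y \<le> u x"
  shows "(\<lambda>s. u s * indicator {0<..} s) \<in> borel_measurable borel"
proof -
  have "(\<lambda>s. - u s) \<in> borel_measurable (restrict_space borel {0<..})"
    using assms by (intro borel_measurable_mono_on_fnc) (auto simp: mono_on_def)
  then have "(\<lambda>s. - (- u s)) \<in> borel_measurable (restrict_space borel {0<..})"
    by (rule borel_measurable_uminus)
  then have "u \<in> borel_measurable (restrict_space borel {0<..})" by simp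
  then have "(\<lambda>s. indicator {0<..} s *\<^sub>R u s) \<in> borel_measurable borel"
    by (subst (asm) borel_measurable_restrict_space_iff) auto
  then show ?thesis by (simp add: mult.commute)
qed

context
  fixes M :: "'a measure" and h :: "'a \<Rightarrow> real"
  assumes hm: "h \<in> borel_measurable M"
    and fin: "emeasure M {x \<in> space M. h x \<noteq> 0} < \<infinity>"
begin

lemma dmeas: "distr_fun M h \<in> borel_measurable borel"
proof -
  have "(\<lambda>s. - distr_fun M h s) \<in> borel_measurable borel"
  proof (rule borel_measurable_piecewise_mono[of "{{..<0},{0..}}"])
    fix c assume c: "c \<in> {{..<0::real},{0..}}"
    have e: "distr_fun M h s = distr_fun M h s'" if "s < 0" "s' < 0" for s s'
    proof -
      have "{x \<in> space M. s < \<bar>h x\<bar>} = {x \<in> space M. s' < \<bar>h x\<bar>}" using that by auto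
      then show ?thesis unfolding distr_fun_def by simp
    qed
    show "mono_on c (\<lambda>s. - distr_fun M h s)"
    proof (rule mono_onI)
      fix x y assume "x \<in> c" "y \<in> c" "x \<le> y"
      then show "- distr_fun M h x \<le> - distr_fun M h y"
        using c e[of x y] dmono[OF hm fin, of x y] by (cases "c = {..<0}") auto
    qed
  next
    show "countable {{..<0::real},{0..}}" by simp
  next
    show "\<Union> {{..<0::real},{0..}} = UNIV" by auto
  next
    fix c assume "c \<in> {{..<0::real},{0..}}"
    then show "c \<in> sets borel" by auto
  qed
  then have "(\<lambda>s. - (- distr_fun M h s)) \<in> borel_measurable borel"
    by (rule borel_measurable_uminus)
  then show ?thesis by simp
qed


lemma rmeas: "(\<lambda>s. rearr M h s * indicator {0<..} s) \<in> borel_measurable borel"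
  using rantimono[OF hm fin] by (intro antimono_meas) auto

context
  fixes r a :: real
  assumes r: "0 < r" and a: "1 < a"
begin

lemma LI_eq_J:
  "(\<integral>\<^sup>+s. ennreal (rearr M h s powr a * (r * s powr (r-1))) * indicator {0<..} s \<partial>lborel)
   = (\<integral>\<^sup>+t. ennreal (a * t powr (a-1) * distr_fun M h t powr r) * indicator {0<..} t \<partial>lborel)"
proof (rule layer_cake)
  show "(\<lambda>s. distr_fun M h s * indicator {0<..} s) \<in> borel_measurable borel"
    using dmeas by measurable
  show "(\<lambda>s. rearr M h s * indicator {0<..} s) \<in> borel_measurable borel" by (rule rmeas)
  show "\<And>s. 0 < s \<Longrightarrow> 0 \<le> rearr M h s" by (rule rnonneg[OF hm fin])
  show "\<And>t. 0 < t \<Longrightarrow> 0 \<le> distr_fun M h t" by (rule dnonneg[OF hm fin])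
  show "\<And>s t. 0 < s \<Longrightarrow> 0 < t \<Longrightarrow> t < rearr M h s \<longleftrightarrow> s < distr_fun M h t" by (rule requiv[OF hm fin])
  show "0 < a" using a by simp
  show "0 < r" by (rule r)
qed

lemma J_eq_A:
  "(\<integral>\<^sup>+t. ennreal (a * t powr (a-1) * distr_fun M h t powr r) * indicator {0<..} t \<partial>lborel)
   = (\<integral>\<^sup>+t. ennreal (a * (a-1) * t powr (a-2)) * (\<integral>\<^sup>+s. ennreal (distr_fun M h s powr r) * indicator {t..} s \<partial>lborel)
              * indicator {0<..} t \<partial>lborel)"
proof (rule tail_identity)
  show "(\<lambda>s. distr_fun M h s powr r * indicator {0<..} s) \<in> borel_measurable borel"
    using dmeas by measurable
  show "\<And>s. 0 \<le> distr_fun M h s powr r" by simp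
  show "1 < a" by (rule a)
qed

lemma J_fin:
  assumes ab: "a \<le> b"
    and Jb: "(\<integral>\<^sup>+t. ennreal (b * t powr (b-1) * distr_fun M h t powr r) * indicator {0<..} t \<partial>lborel) < \<infinity>"
  shows "(\<integral>\<^sup>+t. ennreal (a * t powr (a-1) * distr_fun M h t powr r) * indicator {0<..} t \<partial>lborel) < \<infinity>"
proof -
  define C where "C = measure M {x \<in> space M. h x \<noteq> 0}"
  have b: "1 < b" using a ab by simp
  have pw: "ennreal (a * t powr (a-1) * distr_fun M h t powr r) * indicator {0<..} t
     \<le> ennreal (a * C powr r) * indicator {0<..1} t
       + ennreal (a / b) * (ennreal (b * t powr (b-1) * distr_fun M h t powr r) * indicator {0<..} t)" for t
  proof (cases "0 < t")
    case False then show ?thesis by simp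
  next
    case True
    have d0: "0 \<le> distr_fun M h t" by (rule dnonneg[OF hm fin])
    have dC: "distr_fun M h t \<le> C" unfolding C_def using True by (intro dbound[OF hm fin]) simp
    show ?thesis
    proof (cases "t \<le> 1")
      case True2: True
      have "t powr (a-1) \<le> 1" using True True2 a less_eq_real_def powr01_less_one by force
      moreover have "distr_fun M h t powr r \<le> C powr r" using d0 dC r by (intro powr_mono2) auto
      ultimately have "a * t powr (a-1) * distr_fun M h t powr r \<le> a * C powr r"
        using a by (simp add: mult_left_mono mult_le_one mult_mono)
      then have "ennreal (a * t powr (a-1) * distr_fun M h t powr r) \<le> ennreal (a * C powr r)"
        by (rule ennreal_leI)
      then show ?thesis using True True2 by (simp add: add_increasing2)
    next
      case False2: False
      have "t powr (a-1) \<le> t powr (b-1)" using False2 ab by (intro powr_mono) auto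
      then have "a * t powr (a-1) * distr_fun M h t powr r \<le> (a / b) * (b * t powr (b-1) * distr_fun M h t powr r)"
        using a b by (simp add: mult_left_mono mult_right_mono)
      then have "ennreal (a * t powr (a-1) * distr_fun M h t powr r) \<le> ennreal ((a / b) * (b * t powr (b-1) * distr_fun M h t powr r))"
        by (rule ennreal_leI)
      also have "\<dots> = ennreal (a / b) * ennreal (b * t powr (b-1) * distr_fun M h t powr r)"
        using a b by (intro ennreal_mult) auto
      finally show ?thesis using True False2 by (simp add: add_increasing)
    qed
  qed
  have "(\<integral>\<^sup>+t. ennreal (a * t powr (a-1) * distr_fun M h t powr r) * indicator {0<..} t \<partial>lborel)
    \<le> (\<integral>\<^sup>+t. ennreal (a * C powr r) * indicator {0<..1} t
       + ennreal (a / b) * (ennreal (b * t powr (b-1) * distr_fun M h t powr r) * indicator {0<..} t) \<partial>lborel)"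
    by (rule nn_integral_mono) (rule pw)
  also have "\<dots> = ennreal (a * C powr r)
      + ennreal (a / b) * (\<integral>\<^sup>+t. ennreal (b * t powr (b-1) * distr_fun M h t powr r) * indicator {0<..} t \<partial>lborel)"
    using dmeas by (subst nn_integral_add) (auto simp: nn_integral_cmult)
  also have "\<dots> < \<infinity>" using Jb by (simp add: ennreal_mult_less_top)
  finally show ?thesis .
qed

end

end




lemma Tmeas:
  fixes L :: "real \<Rightarrow> real"
  assumes [measurable]: "L \<in> borel_measurable borel"
  shows "(\<lambda>t. \<integral>\<^sup>+s. ennreal (L s) * indicator {t..} s \<partial>lborel) \<in> borel_measurable borel"
proof -
  have "(\<lambda>t. \<integral>\<^sup>+s. ennreal (L s) * indicator {t..} s \<partial>lborel) = (\<lambda>t. \<integral>\<^sup>+s. ennreal (L s) * indicator {0..} (s - t) \<partial>lborel)"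
    by (intro ext nn_integral_cong) (auto split: split_indicator)
  also have "\<dots> \<in> borel_measurable borel"
    by measurable
  finally show ?thesis .
qed

theorem mainTheorem5:
  fixes M :: "'a measure" and f g :: "'a \<Rightarrow> real" and p0 p q0 q \<tau>1 :: real
  assumes "0 < p0" "0 < p" "1 < q0" "q0 < q" "q / p = q0 / p0"
    and "f \<in> borel_measurable M" "g \<in> borel_measurable M"
    and "emeasure M {x \<in> space M. f x \<noteq> 0} < \<infinity>"
    and "emeasure M {x \<in> space M. g x \<noteq> 0} < \<infinity>"
    and "in_lorentz M p q f" "in_lorentz M p q g"
    and "set_integrable lborel {0<..}
           (\<lambda>t. (rearr M f t powr q0 - rearr M g t powr q0) * ((q0 / p0) * t powr (q0 / p0 - 1)))"
    and "(LINT t:{0<..}|lborel.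
           (rearr M f t powr q0 - rearr M g t powr q0) * ((q0 / p0) * t powr (q0 / p0 - 1))) \<ge> 0"
    and "0 \<le> \<tau>1"
    and "\<And>\<tau>. \<tau> \<ge> \<tau>1 \<Longrightarrow>
           (\<integral>\<^sup>+ s. ennreal (distr_fun M g s powr (q0 / p0)) * indicator {\<tau>..} s \<partial>lborel)
         \<le> (\<integral>\<^sup>+ s. ennreal (distr_fun M f s powr (q0 / p0)) * indicator {\<tau>..} s \<partial>lborel)"
    and "\<And>\<tau>. 0 \<le> \<tau> \<Longrightarrow> \<tau> \<le> \<tau>1 \<Longrightarrow>
           (\<integral>\<^sup>+ s. ennreal (distr_fun M f s powr (q0 / p0)) * indicator {\<tau>..} s \<partial>lborel)
         \<le> (\<integral>\<^sup>+ s. ennreal (distr_fun M g s powr (q0 / p0)) * indicator {\<tau>..} s \<partial>lborel)"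
  shows "lorentz_norm M p q g \<le> lorentz_norm M p q f"
proof -
  note fm = assms(6) and gm = assms(7) and ffin = assms(8) and gfin = assms(9)
  have r: "0 < q0 / p0" using assms(1,3) by simp
  have q01: "1 < q0" by (rule assms(3))
  have q1: "1 < q" using assms(3,4) by simp
  define LI where "LI = (\<lambda>h a. \<integral>\<^sup>+s. ennreal (rearr M h s powr a * ((q0 / p0) * s powr ((q0 / p0)-1))) * indicator {0<..} s \<partial>lborel)"
  define J where "J = (\<lambda>h a. \<integral>\<^sup>+t. ennreal (a * t powr (a-1) * distr_fun M h t powr (q0 / p0)) * indicator {0<..} t \<partial>lborel)"
  define T where "T = (\<lambda>h t. \<integral>\<^sup>+s. ennreal (distr_fun M h s powr (q0 / p0)) * indicator {t..} s \<partial>lborel)"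
  define w where "w = (\<lambda>a t. ennreal (a * (a-1) * t powr (a-2)))"
  define A where "A = (\<lambda>h a. \<integral>\<^sup>+t. w a t * T h t * indicator {0<..} t \<partial>lborel)"
  have LIJf: "LI f a = J f a" if "1 < a" for a
    unfolding LI_def J_def by (rule LI_eq_J[OF fm ffin r that])
  have LIJg: "LI g a = J g a" if "1 < a" for a
    unfolding LI_def J_def by (rule LI_eq_J[OF gm gfin r that])
  have JAf: "J f a = A f a" if "1 < a" for a
    unfolding A_def J_def T_def w_def by (rule J_eq_A[OF fm ffin r that])
  have JAg: "J g a = A g a" if "1 < a" for a
    unfolding A_def J_def T_def w_def by (rule J_eq_A[OF gm gfin r that])
  have lorf: "lorentz_integral M p q f = LI f q" and lorg: "lorentz_integral M p q g = LI g q"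
    unfolding lorentz_integral_def LI_def using assms(5) by simp_all
  have LIqf: "LI f q < \<infinity>" using assms(10) lorf by (simp add: in_lorentz_def)
  have LIqg: "LI g q < \<infinity>" using assms(11) lorg by (simp add: in_lorentz_def)
  have Jq0f: "J f q0 < \<infinity>"
    using J_fin[OF fm ffin r q01, of q] assms(4) LIqf LIJf[OF q1] unfolding J_def by simp
  have Jq0g: "J g q0 < \<infinity>"
    using J_fin[OF gm gfin r q01, of q] assms(4) LIqg LIJg[OF q1] unfolding J_def by simp
  have LIq0f: "LI f q0 < \<infinity>" using Jq0f LIJf[OF q01] by simp
  have LIq0g: "LI g q0 < \<infinity>" using Jq0g LIJg[OF q01] by simp
  define \<phi> where "\<phi> = (\<lambda>h t. rearr M h t powr q0 * ((q0 / p0) * t powr (q0 / p0 - 1)))"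
  have hasint: "has_bochner_integral lborel (\<lambda>t. indicator {0<..} t *\<^sub>R \<phi> h t) (enn2real (LI h q0))"
    if hm: "h \<in> borel_measurable M" and hfin: "emeasure M {x \<in> space M. h x \<noteq> 0} < \<infinity>"
      and LIfin: "LI h q0 < \<infinity>" for h
  proof (rule has_bochner_integral_nn_integral)
    have [measurable]: "(\<lambda>s. rearr M h s * indicator {0<..} s) \<in> borel_measurable borel"
      by (rule rmeas[OF hm hfin])
    have "(\<lambda>t. ((rearr M h t * indicator {0<..} t) powr q0 * ((q0 / p0) * t powr (q0 / p0 - 1))) * indicator {0<..} t)
          \<in> borel_measurable lborel" by measurable
    moreover have "(\<lambda>t. ((rearr M h t * indicator {0<..} t) powr q0 * ((q0 / p0) * t powr (q0 / p0 - 1))) * indicator {0<..} t)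
        = (\<lambda>t. indicator {0<..} t *\<^sub>R \<phi> h t)"
      by (auto simp: \<phi>_def indicator_def fun_eq_iff)
    ultimately show "(\<lambda>t. indicator {0<..} t *\<^sub>R \<phi> h t) \<in> borel_measurable lborel" by metis
    show "AE x in lborel. 0 \<le> indicator {0<..} x *\<^sub>R \<phi> h x"
      using assms(1,3) by (auto simp: \<phi>_def indicator_def intro!: AE_I2)
    show "0 \<le> enn2real (LI h q0)" by simp
    have "(\<integral>\<^sup>+x. ennreal (indicator {0<..} x *\<^sub>R \<phi> h x) \<partial>lborel) = LI h q0"
      unfolding LI_def \<phi>_def by (intro nn_integral_cong) (auto simp: indicator_def)
    then show "(\<integral>\<^sup>+x. ennreal (indicator {0<..} x *\<^sub>R \<phi> h x) \<partial>lborel) = ennreal (enn2real (LI h q0))"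
      using LIfin by simp
  qed
  have HB: "has_bochner_integral lborel (\<lambda>t. indicator {0<..} t *\<^sub>R \<phi> f t - indicator {0<..} t *\<^sub>R \<phi> g t)
          (enn2real (LI f q0) - enn2real (LI g q0))"
    by (intro has_bochner_integral_diff hasint fm ffin gm gfin LIq0f LIq0g)
  have EQ: "(\<lambda>t. indicator {0<..} t *\<^sub>R ((rearr M f t powr q0 - rearr M g t powr q0) * ((q0 / p0) * t powr (q0 / p0 - 1))))
      = (\<lambda>t. indicator {0<..} t *\<^sub>R \<phi> f t - indicator {0<..} t *\<^sub>R \<phi> g t)"
    by (simp add: \<phi>_def algebra_simps fun_eq_iff)
  have "(LINT t:{0<..}|lborel. (rearr M f t powr q0 - rearr M g t powr q0) * ((q0 / p0) * t powr (q0 / p0 - 1)))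
      = enn2real (LI f q0) - enn2real (LI g q0)"
    unfolding set_lebesgue_integral_def EQ by (rule has_bochner_integral_integral_eq[OF HB])
  then have "enn2real (LI g q0) \<le> enn2real (LI f q0)"
    using assms(13) by linarith
  then have X: "ennreal (enn2real (LI g q0)) \<le> ennreal (enn2real (LI f q0))" by (rule ennreal_leI)
  have "LI g q0 = ennreal (enn2real (LI g q0))" using LIq0g by simp
  also have "\<dots> \<le> ennreal (enn2real (LI f q0))" by (rule X)
  also have "\<dots> = LI f q0" using LIq0f by simp
  finally have LIq0: "LI g q0 \<le> LI f q0" .
  have Aq0: "A g q0 \<le> A f q0" "A f q0 < \<infinity>"
    using LIq0 LIq0f LIJf[OF q01] LIJg[OF q01] JAf[OF q01] JAg[OF q01] by simp_all
  have Aq: "A f q < \<infinity>" "A g q < \<infinity>"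
    using LIqf LIqg LIJf[OF q1] LIJg[OF q1] JAf[OF q1] JAg[OF q1] by simp_all
  define Dp where "Dp = (\<lambda>t. T f t - T g t)"
  define Dm where "Dm = (\<lambda>t. T g t - T f t)"
  define N where "N = (\<lambda>a. \<integral>\<^sup>+t. w a t * Dm t * indicator {0<..} t \<partial>lborel)"
  define P where "P = (\<lambda>a. \<integral>\<^sup>+t. w a t * Dp t * indicator {0<..} t \<partial>lborel)"
  have dmf[measurable]: "distr_fun M f \<in> borel_measurable borel" by (rule dmeas[OF fm ffin])
  have dmg[measurable]: "distr_fun M g \<in> borel_measurable borel" by (rule dmeas[OF gm gfin])
  have Tfm[measurable]: "T f \<in> borel_measurable borel"
    unfolding T_def by (rule Tmeas) measurable
  have Tgm[measurable]: "T g \<in> borel_measurable borel"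
    unfolding T_def by (rule Tmeas) measurable
  have Tfin: "T h t < \<infinity>" if Jh: "J h q < \<infinity>" and hd: "distr_fun M h \<in> borel_measurable borel" and t: "0 < t" for h t
  proof -
    have "ennreal (q * t powr (q - 1)) * T h t
        = (\<integral>\<^sup>+s. ennreal (q * t powr (q - 1)) * (ennreal (distr_fun M h s powr (q0 / p0)) * indicator {t..} s) \<partial>lborel)"
      unfolding T_def by (rule nn_integral_cmult[symmetric]) (use hd in measurable)
    also have "\<dots> \<le> J h q"
      unfolding J_def
    proof (rule nn_integral_mono)
      fix s
      show "ennreal (q * t powr (q - 1)) * (ennreal (distr_fun M h s powr (q0 / p0)) * indicator {t..} s)
          \<le> ennreal (q * s powr (q - 1) * distr_fun M h s powr (q0 / p0)) * indicator {0<..} s"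
      proof (cases "t \<le> s")
        case True
        have "t powr (q - 1) \<le> s powr (q - 1)" using True t q1 by (intro powr_mono2) auto
        then have "q * t powr (q - 1) * distr_fun M h s powr (q0 / p0) \<le> q * s powr (q - 1) * distr_fun M h s powr (q0 / p0)"
          using q1 by (intro mult_right_mono mult_left_mono) auto
        then have "ennreal (q * t powr (q - 1) * distr_fun M h s powr (q0 / p0)) \<le> ennreal (q * s powr (q - 1) * distr_fun M h s powr (q0 / p0))"
          by (rule ennreal_leI)
        then show ?thesis using True t q1 by (simp add: ennreal_mult[symmetric] mult.assoc)
      next
        case False then show ?thesis by simp
      qed
    qed
    finally have "ennreal (q * t powr (q - 1)) * T h t < \<infinity>" using Jh by (rule le_less_trans)
    moreover have "ennreal (q * t powr (q - 1)) \<noteq> 0" using t q1 by simp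
    ultimately show ?thesis by (auto simp: ennreal_mult_less_top)
  qed
  have Jqf: "J f q < \<infinity>" using LIqf LIJf[OF q1] by simp
  have Jqg: "J g q < \<infinity>" using LIqg LIJg[OF q1] by simp
  have pt: "T f t + Dm t = T g t + Dp t" for t
    unfolding Dp_def Dm_def
    by (cases "T f t = top"; cases "T g t = top"; cases "T f t \<le> T g t")
       (auto simp: add_diff_inverse_ennreal diff_eq_0_iff_ennreal less_top)
  have ANP: "A f a + N a = A g a + P a" for a
  proof -
    have "A f a + N a = (\<integral>\<^sup>+t. w a t * T f t * indicator {0<..} t + w a t * Dm t * indicator {0<..} t \<partial>lborel)"
      unfolding A_def N_def Dm_def w_def by (subst nn_integral_add) auto
    also have "\<dots> = (\<integral>\<^sup>+t. w a t * T g t * indicator {0<..} t + w a t * Dp t * indicator {0<..} t \<partial>lborel)"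
      by (intro nn_integral_cong) (metis pt distrib_left distrib_right)
    also have "\<dots> = A g a + P a"
      unfolding A_def P_def Dp_def w_def by (subst nn_integral_add) auto
    finally show ?thesis .
  qed
  define c where "c = q * (q - 1) / (q0 * (q0 - 1))"
  define K where "K = ennreal (c * \<tau>1 powr (q - q0))"
  have c0: "0 \<le> c" unfolding c_def using q01 q1 by simp
  have wq: "w q t = ennreal (c * t powr (q - q0)) * w q0 t" if "0 < t" for t
  proof -
    have "t powr (q - 2) = t powr (q - q0) * t powr (q0 - 2)"
      using that by (simp add: powr_add[symmetric])
    then have "q * (q - 1) * t powr (q - 2) = (c * t powr (q - q0)) * (q0 * (q0 - 1) * t powr (q0 - 2))"
      unfolding c_def using q01 by (simp add: field_simps)
    then show ?thesis unfolding w_def using c0 q01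
      by (simp add: ennreal_mult[symmetric])
  qed
  have Kw: "K * w q0 t = ennreal (c * \<tau>1 powr (q - q0)) * w q0 t" for t
    unfolding K_def ..
  have ineqN: "w q t * Dm t * indicator {0<..} t \<le> K * (w q0 t * Dm t * indicator {0<..} t)" for t
  proof (cases "0 < t")
    case False then show ?thesis by simp
  next
    case True
    show ?thesis
    proof (cases "t < \<tau>1")
      case True2: True
      have "t powr (q - q0) \<le> \<tau>1 powr (q - q0)" using True True2 assms(4) by (intro powr_mono2) auto
      then have "ennreal (c * t powr (q - q0)) \<le> ennreal (c * \<tau>1 powr (q - q0))"
        using c0 by (intro ennreal_leI mult_left_mono) auto
      then have "w q t \<le> K * w q0 t" unfolding wq[OF True] K_def by (intro mult_right_mono) auto
      then have "w q t * Dm t \<le> K * w q0 t * Dm t" by (rule mult_right_mono) simp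
      then show ?thesis using True by (simp add: mult.assoc)
    next
      case False2: False
      then have "T g t \<le> T f t" unfolding T_def using assms(15)[of t] by simp
      then have "Dm t = 0" unfolding Dm_def using Tfin[OF Jqg dmg True] by (simp add: diff_eq_0_iff_ennreal)
      then show ?thesis by simp
    qed
  qed
  have ineqP: "K * (w q0 t * Dp t * indicator {0<..} t) \<le> w q t * Dp t * indicator {0<..} t" for t
  proof (cases "0 < t")
    case False then show ?thesis by simp
  next
    case True
    show ?thesis
    proof (cases "\<tau>1 \<le> t")
      case True2: True
      have "\<tau>1 powr (q - q0) \<le> t powr (q - q0)" using True True2 assms(4,14) by (intro powr_mono2) auto
      then have "ennreal (c * \<tau>1 powr (q - q0)) \<le> ennreal (c * t powr (q - q0))"
        using c0 by (intro ennreal_leI mult_left_mono) auto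
      then have "K * w q0 t \<le> w q t" unfolding wq[OF True] K_def by (intro mult_right_mono) auto
      then have "K * w q0 t * Dp t \<le> w q t * Dp t" by (rule mult_right_mono) simp
      then show ?thesis using True by (simp add: mult.assoc)
    next
      case False2: False
      then have "T f t \<le> T g t" unfolding T_def using assms(16)[of t] True by simp
      then have "Dp t = 0" unfolding Dp_def using Tfin[OF Jqf dmf True] by (simp add: diff_eq_0_iff_ennreal)
      then show ?thesis by simp
    qed
  qed
  have wm[measurable]: "w a \<in> borel_measurable borel" for a unfolding w_def by measurable
  have Dmm[measurable]: "Dm \<in> borel_measurable borel" unfolding Dm_def by measurable
  have Dpm[measurable]: "Dp \<in> borel_measurable borel" unfolding Dp_def by measurable
  have NPq0: "N q0 \<le> P q0"
  proof -
    have "A f q0 + N q0 = A g q0 + P q0" by (rule ANP)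
    also have "\<dots> \<le> A f q0 + P q0" using Aq0(1) by (rule add_right_mono)
    finally show ?thesis using Aq0(2) by (auto simp: ennreal_add_left_cancel_le)
  qed
  have "N q \<le> (\<integral>\<^sup>+t. K * (w q0 t * Dm t * indicator {0<..} t) \<partial>lborel)"
    unfolding N_def by (rule nn_integral_mono) (rule ineqN)
  also have "\<dots> = K * N q0" unfolding N_def by (rule nn_integral_cmult) measurable
  also have "\<dots> \<le> K * P q0" using NPq0 by (rule mult_left_mono) simp
  also have "K * P q0 = (\<integral>\<^sup>+t. K * (w q0 t * Dp t * indicator {0<..} t) \<partial>lborel)"
    unfolding P_def by (rule nn_integral_cmult[symmetric]) measurable
  also have "\<dots> \<le> P q" unfolding P_def by (rule nn_integral_mono) (rule ineqP)
  finally have NPq: "N q \<le> P q" .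
  have "N q \<le> A g q"
    unfolding N_def A_def Dm_def
    by (intro nn_integral_mono mult_right_mono mult_left_mono diff_le_self_ennreal) auto
  then have Nfin: "N q < \<infinity>" using Aq(2) by (rule le_less_trans)
  have "N q + A g q \<le> P q + A g q" using NPq by (rule add_right_mono)
  also have "\<dots> = N q + A f q" using ANP[of q] by (simp add: add.commute)
  finally have Aqle: "A g q \<le> A f q" using Nfin by (auto simp: ennreal_add_left_cancel_le)
  have LIle: "lorentz_integral M p q g \<le> lorentz_integral M p q f"
    using Aqle lorf lorg LIJf[OF q1] LIJg[OF q1] JAf[OF q1] JAg[OF q1] by simp
  have "enn2real (lorentz_integral M p q g) \<le> enn2real (lorentz_integral M p q f)"
    using LIle LIqf lorf by (intro enn2real_mono) auto
  then show ?thesis unfolding lorentz_norm_def using q1 by (intro powr_mono2) auto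
qed


end
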